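(* For $n>0$ and $J\subseteq S$, there is a bijection $\mathfrak{S}_n^J(231)\simeq\mathrm{NC}_n^J$.
   Context: $\mathfrak{S}_n$ is the symmetric group on $[n]=\{1,\dots,n\}$, $s_i=(i,i+1)$, $S=\{s_1,\dots,s_{n-1}\}$, one-line notation $w=w_1\cdots w_n$. For $J\subseteq S$, $\mathfrak{S}_n^J$ is the set of $w$ with $w_i<w_{i+1}$ whenever $s_i\in J$. Writing $J=S\setminus\{s_{j_1},\dots,s_{j_r}\}$ with $j_1<\dots<j_r$, the $J$-regions are $\{1,\dots,j_1\},\{j_1+1,\dots,j_2\},\dots,\{j_r+1,\dots,n\}$. $\mathfrak{S}_n^J(231)$ is the set of $w\in\mathfrak{S}_n^J$ admitting no indices $i<j<k$ in pairwise different $J$-regions with $w_k<w_i<w_j$ and $w_i=w_k+1$. For a set partition $\mathbf P$ of $[n]$, a bump is a pair $(a,b)$, $a<b$, with $a,b$ in the same part and no element of that part strictly between them. $\mathbf P$ is $J$-noncrossing if: (NC1) no two distinct elements of the same $J$-region lie in the same part; (NC2) whenever two distinct bumps $(i_1,i_2),(j_1,j_2)$ satisfy $i_1<j_1<i_2<j_2$, either $i_1,j_1$ lie in the same $J$-region or $i_2,j_1$ lie in the same $J$-region; (NC3) whenever two distinct bumps satisfy $i_1<j_1<j_2<i_2$, then $i_1$ and $j_1$ lie in different $J$-regions. $\mathrm{NC}_n^J$ denotes the set of $J$-noncrossing partitions of $[n]$. *)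

theory Defs
  imports "HOL-Combinatorics.Permutations" "HOL-Library.Disjoint_Sets"
begin

text \<open>The simple reflection s_i is encoded by its index i, so J is a subset of
  {1..<n} (i.e. of {1..n-1}). Positions k with k not in J are the cut points
  j_1 < ... < j_r.\<close>

definition same_region :: "nat set \<Rightarrow> nat \<Rightarrow> nat \<Rightarrow> bool" where
  "same_region J a b \<longleftrightarrow> (\<forall>k. min a b \<le> k \<and> k < max a b \<longrightarrow> k \<in> J)"

definition parabolic :: "nat \<Rightarrow> nat set \<Rightarrow> (nat \<Rightarrow> nat) set" where
  "parabolic n J = {w. w permutes {1..n} \<and> (\<forall>i\<in>J. w i < w (Suc i))}"

definition parabolic_231 :: "nat \<Rightarrow> nat set \<Rightarrow> (nat \<Rightarrow> nat) set" where
  "parabolic_231 n J = {w \<in> parabolic n J.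
     \<not> (\<exists>i j k. 1 \<le> i \<and> i < j \<and> j < k \<and> k \<le> n \<and>
            \<not> same_region J i j \<and> \<not> same_region J j k \<and> \<not> same_region J i k \<and>
            w k < w i \<and> w i < w j \<and> w i = w k + 1)}"

definition bump :: "nat set set \<Rightarrow> nat \<Rightarrow> nat \<Rightarrow> bool" where
  "bump P a b \<longleftrightarrow> a < b \<and> (\<exists>B\<in>P. a \<in> B \<and> b \<in> B \<and> \<not> (\<exists>c\<in>B. a < c \<and> c < b))"

definition noncrossing_J :: "nat \<Rightarrow> nat set \<Rightarrow> nat set set set" where
  "noncrossing_J n J = {P. partition_on {1..n} P \<and>
     \<comment> \<open>NC1\<close>
     (\<forall>B\<in>P. \<forall>a\<in>B. \<forall>b\<in>B. a \<noteq> b \<longrightarrow> \<not> same_region J a b) \<and>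
     \<comment> \<open>NC2\<close>
     (\<forall>i1 i2 j1 j2. bump P i1 i2 \<and> bump P j1 j2 \<and> (i1, i2) \<noteq> (j1, j2) \<and>
         i1 < j1 \<and> j1 < i2 \<and> i2 < j2 \<longrightarrow> same_region J i1 j1 \<or> same_region J i2 j1) \<and>
     \<comment> \<open>NC3\<close>
     (\<forall>i1 i2 j1 j2. bump P i1 i2 \<and> bump P j1 j2 \<and> (i1, i2) \<noteq> (j1, j2) \<and>
         i1 < j1 \<and> j1 < j2 \<and> j2 < i2 \<longrightarrow> \<not> same_region J i1 j1)}"

end

theory Submission
  imports Defs
begin

lemma sr_iff: "a \<le> b \<Longrightarrow> same_region J a b \<longleftrightarrow> (\<forall>k. a \<le> k \<and> k < b \<longrightarrow> k \<in> J)"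
  by (simp add: same_region_def min_def max_def)
lemma sr_refl[simp]: "same_region J a a" by (auto simp add: same_region_def)
lemma sr_sym: "same_region J a b = same_region J b a" by (simp add: same_region_def min.commute max.commute)
lemma sr_split: "a \<le> b \<Longrightarrow> b \<le> c \<Longrightarrow> same_region J a c \<longleftrightarrow> same_region J a b \<and> same_region J b c"
  apply (simp add: sr_iff)
  by (meson le_trans less_le_trans not_le)

definition lk :: "nat set \<Rightarrow> (nat\<Rightarrow>nat) \<Rightarrow> nat \<Rightarrow> bool" where
  "lk X w v \<longleftrightarrow> (\<exists>a\<in>X. \<exists>b\<in>X. a < b \<and> w a = Suc v \<and> w b = v)"
definition lrel :: "nat set \<Rightarrow> (nat\<Rightarrow>nat) \<Rightarrow> (nat\<times>nat) set" where
  "lrel X w = {(x,y). x\<in>X \<and> y\<in>X \<and> (\<forall>v. min (w x) (w y) \<le> v \<and> v < max (w x) (w y) \<longrightarrow> lk X w v)}"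
definition brel :: "(nat\<times>nat) set \<Rightarrow> nat \<Rightarrow> nat \<Rightarrow> bool" where
  "brel R a b \<longleftrightarrow> a < b \<and> (a,b)\<in>R \<and> (\<forall>c. a < c \<and> c < b \<longrightarrow> (a,c)\<notin>R)"
definition parab :: "nat set \<Rightarrow> nat set \<Rightarrow> (nat\<Rightarrow>nat) \<Rightarrow> bool" where
  "parab J X w \<longleftrightarrow> (\<forall>a\<in>X. \<forall>b\<in>X. a < b \<longrightarrow> same_region J a b \<longrightarrow> w a < w b)"
definition av :: "nat set \<Rightarrow> nat set \<Rightarrow> (nat\<Rightarrow>nat) \<Rightarrow> bool" where
  "av J X w \<longleftrightarrow> (\<forall>i\<in>X. \<forall>j\<in>X. \<forall>k\<in>X. i<j \<longrightarrow> j<k \<longrightarrow> \<not>same_region J i j \<longrightarrow> \<not>same_region J j k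
      \<longrightarrow> \<not>same_region J i k \<longrightarrow> w i = Suc (w k) \<longrightarrow> w j \<le> w i)"
definition SS :: "nat set \<Rightarrow> nat set \<Rightarrow> (nat\<Rightarrow>nat) set" where
  "SS J X = {w. bij_betw w X {1..card X} \<and> (\<forall>x. x\<notin>X \<longrightarrow> w x = x) \<and> parab J X w \<and> av J X w}"
definition rend :: "nat set \<Rightarrow> nat set \<Rightarrow> nat \<Rightarrow> bool" where
  "rend J X e \<longleftrightarrow> e\<in>X \<and> (\<forall>x\<in>X. e < x \<longrightarrow> \<not> same_region J e x)"
definition uncov :: "nat set \<Rightarrow> (nat\<times>nat) set \<Rightarrow> nat \<Rightarrow> bool" where
  "uncov J R e \<longleftrightarrow> (\<forall>a b. brel R a b \<and> a < e \<and> e < b \<longrightarrow> same_region J a e \<or> same_region J e b)"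
definition bmin :: "(nat\<times>nat) set \<Rightarrow> nat \<Rightarrow> bool" where
  "bmin R e \<longleftrightarrow> (\<forall>x. (x,e)\<in>R \<longrightarrow> e \<le> x)"
definition cand :: "nat set \<Rightarrow> nat set \<Rightarrow> (nat\<times>nat) set \<Rightarrow> nat set" where
  "cand J X R = {e. rend J X e \<and> bmin R e \<and> uncov J R e}"
definition topc :: "nat set \<Rightarrow> nat set \<Rightarrow> (nat\<times>nat) set \<Rightarrow> nat" where
  "topc J X R = Max (cand J X R)"
definition NCR :: "nat set \<Rightarrow> nat set \<Rightarrow> (nat\<times>nat) set set" where
  "NCR J X = {R. equiv X R \<and> (\<forall>a b. (a,b)\<in>R \<longrightarrow> a\<noteq>b \<longrightarrow> \<not>same_region J a b) \<and>
   (\<forall>i1 i2 j1 j2. brel R i1 i2 \<and> brel R j1 j2 \<and> i1<j1 \<and> j1<i2 \<and> i2<j2 \<longrightarrow> same_region J i1 j1 \<or> same_region J i2 j1) \<and>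
   (\<forall>i1 i2 j1 j2. brel R i1 i2 \<and> brel R j1 j2 \<and> i1<j1 \<and> j1<j2 \<and> j2<i2 \<longrightarrow> \<not>same_region J i1 j1)}"

section \<open>Permutation side\<close>

lemma bij_surj_val: "bij_betw w X {1..n} \<Longrightarrow> 1 \<le> v \<Longrightarrow> v \<le> n \<Longrightarrow> \<exists>x\<in>X. w x = v"
  by (metis atLeastAtMost_iff bij_betw_imp_surj_on imageE)
lemma bij_val: "bij_betw w X {1..n} \<Longrightarrow> x \<in> X \<Longrightarrow> 1 \<le> w x \<and> w x \<le> n"
  using bij_betwE by fastforce
lemma bij_inj: "bij_betw w X {1..n} \<Longrightarrow> x \<in> X \<Longrightarrow> y \<in> X \<Longrightarrow> w x = w y \<Longrightarrow> x = y"
  by (metis bij_betw_imp_inj_on inj_onD)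

lemma lrel_mem: "(x,y) \<in> lrel X w \<Longrightarrow> x \<in> X \<and> y \<in> X"
  by (simp add: lrel_def)

lemma lrel_lk: "(x,y) \<in> lrel X w \<Longrightarrow> min (w x) (w y) \<le> v \<Longrightarrow> v < max (w x) (w y) \<Longrightarrow> lk X w v"
  by (simp add: lrel_def)

lemma lrel_sub:
  assumes a: "(x,y) \<in> lrel X w" and z: "z \<in> X" "min (w x) (w y) \<le> w z" "w z \<le> max (w x) (w y)"
  shows "(x,z) \<in> lrel X w"
proof -
  have "\<forall>v. min (w x) (w z) \<le> v \<and> v < max (w x) (w z) \<longrightarrow> lk X w v"
  proof (intro allI impI)
    fix v assume v: "min (w x) (w z) \<le> v \<and> v < max (w x) (w z)"
    have "min (w x) (w y) \<le> v \<and> v < max (w x) (w y)" using v z by linarith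
    then show "lk X w v" using a lrel_lk by blast
  qed
  then show ?thesis using lrel_mem[OF a] z by (simp add: lrel_def)
qed

lemma lrel_sym: assumes a: "(x,y) \<in> lrel X w" shows "(y,x) \<in> lrel X w"
proof -
  have e: "min (w y) (w x) = min (w x) (w y)" "max (w y) (w x) = max (w x) (w y)"
    by (rule min.commute, rule max.commute)
  have "\<forall>v. min (w y) (w x) \<le> v \<and> v < max (w y) (w x) \<longrightarrow> lk X w v"
    using a unfolding e by (simp add: lrel_def)
  then show ?thesis using lrel_mem[OF a] by (simp add: lrel_def)
qed

lemma lrel_trans:
  assumes a: "(x,y) \<in> lrel X w" "(y,z) \<in> lrel X w"
  shows "(x,z) \<in> lrel X w"
proof -
  have "\<forall>v. min (w x) (w z) \<le> v \<and> v < max (w x) (w z) \<longrightarrow> lk X w v"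
  proof (intro allI impI)
    fix v assume v: "min (w x) (w z) \<le> v \<and> v < max (w x) (w z)"
    have "(min (w x) (w y) \<le> v \<and> v < max (w x) (w y)) \<or> (min (w y) (w z) \<le> v \<and> v < max (w y) (w z))"
      using v by linarith
    then show "lk X w v" using a lrel_lk by blast
  qed
  then show ?thesis using lrel_mem[OF a(1)] lrel_mem[OF a(2)] by (simp add: lrel_def)
qed

lemma lrel_refl: "x \<in> X \<Longrightarrow> (x,x) \<in> lrel X w"
  unfolding lrel_def by auto

lemma lrel_equiv: "equiv X (lrel X w)"
proof (rule equivI)
  show "lrel X w \<subseteq> X \<times> X" using lrel_mem by auto
  show "refl_on X (lrel X w)" by (rule refl_onI, rule lrel_refl)
  show "sym (lrel X w)" by (rule symI, erule lrel_sym)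
  show "trans (lrel X w)" by (rule transI, erule lrel_trans)
qed

lemma lrel_dec:
  assumes B: "bij_betw w X {1..n}"
  shows "(x,y) \<in> lrel X w \<Longrightarrow> w x < w y \<Longrightarrow> y < x"
proof (induction "w y - w x" arbitrary: y rule: less_induct)
  case less
  have xy: "x\<in>X" "y\<in>X" using less.prems by (auto simp: lrel_def)
  have "lk X w (w y - 1)" using less.prems by (auto simp: lrel_def)
  then obtain a b where ab: "a\<in>X" "b\<in>X" "a<b" "w a = Suc (w y - 1)" "w b = w y - 1" by (auto simp: lk_def)
  have "w a = w y" using ab(4) less.prems(2) by simp
  then have "a = y" using bij_inj[OF B ab(1) xy(2)] by simp
  show "y < x"
  proof (cases "w b = w x")
    case True
    then have "b = x" using bij_inj[OF B] ab xy by metis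
    then show ?thesis using ab \<open>a = y\<close> by simp
  next
    case False
    then have "w x < w b" using ab less.prems(2) by simp
    have "(x,b) \<in> lrel X w" using lrel_sub[OF less.prems(1) ab(2)] ab less.prems(2) by simp
    then have "b < x" using less.hyps[of b] \<open>w x < w b\<close> ab less.prems(2) by simp
    then show ?thesis using ab \<open>a = y\<close> by simp
  qed
qed

lemma brel_lrel:
  assumes B: "bij_betw w X {1..n}"
  shows "brel (lrel X w) a b \<longleftrightarrow> a\<in>X \<and> b\<in>X \<and> a<b \<and> w a = Suc (w b)"
proof
  assume h: "brel (lrel X w) a b"
  then have ab: "a < b" "(a,b) \<in> lrel X w" and nc: "\<And>c. a < c \<Longrightarrow> c < b \<Longrightarrow> (a,c) \<notin> lrel X w"
    by (auto simp: brel_def)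
  have X: "a \<in> X" "b \<in> X" using ab lrel_mem by auto
  have "w a \<noteq> w b" using bij_inj[OF B] X ab by auto
  moreover have "\<not> w a < w b" using lrel_dec[OF B ab(2)] ab by auto
  ultimately have gt: "w b < w a" by simp
  have "w a = Suc (w b)"
  proof (rule ccontr)
    assume "w a \<noteq> Suc (w b)"
    then have "Suc (w b) < w a" using gt by simp
    then obtain z where z: "z \<in> X" "w z = Suc (w b)" using bij_surj_val[OF B, of "Suc (w b)"] bij_val[OF B X(1)] by auto
    have az: "(a,z) \<in> lrel X w" using lrel_sub[OF ab(2) z(1)] z gt \<open>Suc (w b) < w a\<close> by simp
    have "a < z" using lrel_dec[OF B lrel_sym[OF az]] z \<open>Suc (w b) < w a\<close> by simp
    have bz: "(b,z) \<in> lrel X w" using lrel_trans[OF lrel_sym[OF ab(2)] az] .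
    have "z < b" using lrel_dec[OF B bz] z by simp
    then show False using nc[OF \<open>a < z\<close>] az by simp
  qed
  then show "a\<in>X \<and> b\<in>X \<and> a<b \<and> w a = Suc (w b)" using X ab by simp
next
  assume h: "a\<in>X \<and> b\<in>X \<and> a<b \<and> w a = Suc (w b)"
  have lkb: "lk X w (w b)" unfolding lk_def using h by blast
  have "\<forall>v. min (w a) (w b) \<le> v \<and> v < max (w a) (w b) \<longrightarrow> lk X w v"
  proof (intro allI impI)
    fix v assume "min (w a) (w b) \<le> v \<and> v < max (w a) (w b)"
    then have "v = w b" using h by (simp add: min_def max_def)
    then show "lk X w v" using lkb by simp
  qed
  then have ab: "(a,b) \<in> lrel X w" using h by (simp add: lrel_def)
  have "(a,c) \<notin> lrel X w" if c: "a < c" "c < b" for c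
  proof
    assume ac: "(a,c) \<in> lrel X w"
    have cX: "c \<in> X" using ac lrel_mem by auto
    have "w c \<noteq> w a" using bij_inj[OF B, of c a] h cX c by auto
    have "w c \<noteq> w b" using bij_inj[OF B, of c b] h cX c by auto
    show False
    proof (cases "w c < w b")
      case True
      have "(c,b) \<in> lrel X w" using lrel_sub[OF lrel_sym[OF ac] ] h True by auto
      then have "b < c" using lrel_dec[OF B] True by blast
      then show False using c by simp
    next
      case False
      then have "w a < w c" using \<open>w c \<noteq> w b\<close> \<open>w c \<noteq> w a\<close> h by auto
      then show False using lrel_dec[OF B ac] c by auto
    qed
  qed
  then show "brel (lrel X w) a b" using ab h by (auto simp: brel_def)
qed


lemma sr_left: "a \<le> b \<Longrightarrow> b \<le> c \<Longrightarrow> same_region J a c \<Longrightarrow> same_region J a b"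
  using sr_split by blast
lemma sr_right: "a \<le> b \<Longrightarrow> b \<le> c \<Longrightarrow> same_region J a c \<Longrightarrow> same_region J b c"
  using sr_split by blast
lemma sr_join: "a \<le> b \<Longrightarrow> b \<le> c \<Longrightarrow> same_region J a b \<Longrightarrow> same_region J b c \<Longrightarrow> same_region J a c"
  using sr_split by blast

lemma SS_D:
  assumes "w \<in> SS J X"
  shows "bij_betw w X {1..card X}" "\<And>x. x \<notin> X \<Longrightarrow> w x = x" "parab J X w" "av J X w"
  using assms by (auto simp: SS_def)

lemma parabD: "parab J X w \<Longrightarrow> a \<in> X \<Longrightarrow> b \<in> X \<Longrightarrow> a < b \<Longrightarrow> same_region J a b \<Longrightarrow> w a < w b"
  by (simp add: parab_def)

lemma avD: "av J X w \<Longrightarrow> i\<in>X \<Longrightarrow> j\<in>X \<Longrightarrow> k\<in>X \<Longrightarrow> i<j \<Longrightarrow> j<k \<Longrightarrow> \<not>same_region J i j \<Longrightarrow> \<not>same_region J j k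
      \<Longrightarrow> \<not>same_region J i k \<Longrightarrow> w i = Suc (w k) \<Longrightarrow> w j \<le> w i"
  unfolding av_def by blast

lemma SS_NCR:
  assumes w: "w \<in> SS J X"
  shows "lrel X w \<in> NCR J X"
proof -
  have B: "bij_betw w X {1..card X}" and P: "parab J X w" and A: "av J X w" using SS_D[OF w] by auto
  note br = brel_lrel[OF B]
  have nc1: "\<forall>a b. (a,b)\<in>lrel X w \<longrightarrow> a\<noteq>b \<longrightarrow> \<not>same_region J a b"
  proof (intro allI impI notI)
    fix a b assume h: "(a,b)\<in>lrel X w" "a\<noteq>b" "same_region J a b"
    have X: "a\<in>X" "b\<in>X" using lrel_mem[OF h(1)] by auto
    show False
    proof (cases "a < b")
      case True
      then have "w a < w b" using parabD[OF P X] h(3) by blast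
      then have "b < a" using lrel_dec[OF B h(1)] by blast
      then show False using True by simp
    next
      case False
      then have "b < a" using h(2) by simp
      then have "w b < w a" using parabD[OF P X(2) X(1)] h(3) sr_sym by metis
      then have "a < b" using lrel_dec[OF B lrel_sym[OF h(1)]] by blast
      then show False using \<open>b<a\<close> by simp
    qed
  qed
  have nc2: "\<forall>i1 i2 j1 j2. brel (lrel X w) i1 i2 \<and> brel (lrel X w) j1 j2 \<and> i1<j1 \<and> j1<i2 \<and> i2<j2 \<longrightarrow> same_region J i1 j1 \<or> same_region J i2 j1"
  proof (intro allI impI)
    fix i1 i2 j1 j2 assume h: "brel (lrel X w) i1 i2 \<and> brel (lrel X w) j1 j2 \<and> i1<j1 \<and> j1<i2 \<and> i2<j2"
    then have I: "i1\<in>X" "i2\<in>X" "w i1 = Suc (w i2)" and Jj: "j1\<in>X" "j2\<in>X" "w j1 = Suc (w j2)"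
      and o: "i1<j1" "j1<i2" "i2<j2" using br by auto
    show "same_region J i1 j1 \<or> same_region J i2 j1"
    proof (rule ccontr)
      assume "\<not> (same_region J i1 j1 \<or> same_region J i2 j1)"
      then have n1: "\<not> same_region J i1 j1" and n2: "\<not> same_region J j1 i2" using sr_sym by metis+
      have n3: "\<not> same_region J i1 i2" using n1 sr_left[of i1 j1 i2 J] o by auto
      have "w j1 \<le> w i1" using avD[OF A I(1) Jj(1) I(2) o(1) o(2) n1 n2 n3 I(3)] .
      moreover have "w j1 \<noteq> w i1" using bij_inj[OF B Jj(1) I(1)] o by auto
      moreover have "w j1 \<noteq> w i2" using bij_inj[OF B Jj(1) I(2)] o by auto
      ultimately have lt: "w j1 < w i2" using I(3) by simp
      show False
      proof (cases "same_region J i2 j2")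
        case True
        then have "w i2 < w j2" using parabD[OF P I(2) Jj(2) o(3)] by blast
        then show False using lt Jj(3) by simp
      next
        case False
        have n4: "\<not> same_region J j1 j2" using n2 sr_left[of j1 i2 j2 J] o by auto
        have "w i2 \<le> w j1" using avD[OF A Jj(1) I(2) Jj(2) o(2) o(3) n2 False n4 Jj(3)] .
        then show False using lt by simp
      qed
    qed
  qed
  have nc3: "\<forall>i1 i2 j1 j2. brel (lrel X w) i1 i2 \<and> brel (lrel X w) j1 j2 \<and> i1<j1 \<and> j1<j2 \<and> j2<i2 \<longrightarrow> \<not>same_region J i1 j1"
  proof (intro allI impI notI)
    fix i1 i2 j1 j2 assume h: "brel (lrel X w) i1 i2 \<and> brel (lrel X w) j1 j2 \<and> i1<j1 \<and> j1<j2 \<and> j2<i2"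
      and s: "same_region J i1 j1"
    then have I: "i1\<in>X" "i2\<in>X" "w i1 = Suc (w i2)" and Jj: "j1\<in>X" "j2\<in>X" "w j1 = Suc (w j2)"
      and o: "i1<j1" "j1<j2" "j2<i2" using br by auto
    have lt: "w i1 < w j1" using parabD[OF P I(1) Jj(1) o(1) s] .
    show False
    proof (cases "same_region J j2 i2")
      case True
      then have "w j2 < w i2" using parabD[OF P Jj(2) I(2) o(3)] by blast
      then show False using lt I(3) Jj(3) by simp
    next
      case False
      show False
      proof (cases "same_region J i1 j2")
        case True
        then have "same_region J j1 j2" using sr_right[of i1 j1 j2 J] o by auto
        then have "w j1 < w j2" using parabD[OF P Jj(1) Jj(2) o(2)] by blast
        then show False using Jj(3) by simp
      next
        case False2: False
        have n3: "\<not> same_region J i1 i2" using False sr_right[of i1 j2 i2 J] o by auto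
        have "w j2 \<le> w i1" using avD[OF A I(1) Jj(2) I(2) _ o(3) False2 False n3 I(3)] o by auto
        moreover have "w j2 \<noteq> w i1" using bij_inj[OF B Jj(2) I(1)] o by auto
        ultimately show False using lt I(3) Jj(3) by simp
      qed
    qed
  qed
  show ?thesis unfolding NCR_def using lrel_equiv nc1 nc2 nc3 by blast
qed

lemma SS_top:
  assumes w: "w \<in> SS J X" and m: "m \<in> X" "w m = card X"
  shows "m \<in> cand J X (lrel X w)" and "\<And>e. e \<in> cand J X (lrel X w) \<Longrightarrow> e \<le> m"
proof -
  have B: "bij_betw w X {1..card X}" and P: "parab J X w" and A: "av J X w" using SS_D[OF w] by auto
  note br = brel_lrel[OF B]
  have r: "rend J X m"
    unfolding rend_def
  proof (intro conjI ballI impI notI)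
    fix x assume "x \<in> X" "m < x" "same_region J m x"
    then have "w m < w x" using parabD[OF P m(1)] by blast
    then show False using bij_val[OF B \<open>x\<in>X\<close>] m by simp
  qed (rule m(1))
  have bm: "bmin (lrel X w) m"
    unfolding bmin_def
  proof (intro allI impI)
    fix x assume h: "(x,m) \<in> lrel X w"
    have xX: "x \<in> X" using lrel_mem[OF h] by simp
    show "m \<le> x"
    proof (cases "x = m")
      case False
      then have "w x \<noteq> w m" using bij_inj[OF B xX m(1)] by auto
      then have "w x < w m" using bij_val[OF B xX] m by simp
      then show ?thesis using lrel_dec[OF B h] by simp
    qed simp
  qed
  have uc: "uncov J (lrel X w) m"
    unfolding uncov_def
  proof (intro allI impI)
    fix a b assume h: "brel (lrel X w) a b \<and> a < m \<and> m < b"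
    then have ab: "a \<in> X" "b \<in> X" "a < b" "w a = Suc (w b)" using br by auto
    show "same_region J a m \<or> same_region J m b"
    proof (rule ccontr)
      assume n: "\<not> (same_region J a m \<or> same_region J m b)"
      show False
      proof (cases "same_region J a b")
        case True
        then show False using parabD[OF P ab(1) ab(2) ab(3)] ab(4) by simp
      next
        case False
        have "w m \<le> w a" using avD[OF A ab(1) m(1) ab(2)] h n False ab(4) by blast
        then have "w a = w m" using bij_val[OF B ab(1)] m by simp
        then show False using bij_inj[OF B ab(1) m(1)] h by simp
      qed
    qed
  qed
  show "m \<in> cand J X (lrel X w)" unfolding cand_def using r bm uc by blast
  fix e assume e: "e \<in> cand J X (lrel X w)"
  then have re: "rend J X e" and be: "bmin (lrel X w) e" and ue: "uncov J (lrel X w) e"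
    by (auto simp: cand_def)
  have eX: "e \<in> X" using re by (simp add: rend_def)
  show "e \<le> m"
  proof (rule ccontr)
    assume "\<not> e \<le> m"
    then have me: "m < e" by simp
    define N where "N = card X"
    define v where "v = w e"
    have "w e \<noteq> w m" using bij_inj[OF B eX m(1)] me by auto
    then have vN: "v < N" using bij_val[OF B eX] m by (simp add: v_def N_def)
    obtain p where p: "p \<in> X" "w p = Suc v" using bij_surj_val[OF B, of "Suc v"] vN N_def by auto
    have "p \<noteq> e" using p v_def by auto
    have pe: "e < p"
    proof (rule ccontr)
      assume "\<not> e < p"
      then have "p < e" using \<open>p \<noteq> e\<close> by simp
      then have "brel (lrel X w) p e" using br p eX v_def by simp
      then have "(p,e) \<in> lrel X w" by (simp add: brel_def)
      then have "e \<le> p" using be by (simp add: bmin_def)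
      then show False using \<open>p < e\<close> by simp
    qed
    define U where "U = {u. Suc v \<le> u \<and> u \<le> N \<and> (\<exists>q\<in>X. w q = u \<and> e < q)}"
    have fU: "finite U" unfolding U_def by (rule finite_subset[of _ "{..N}"]) auto
    have "Suc v \<in> U" unfolding U_def using p pe vN by auto
    then have u0U: "Max U \<in> U" using fU Max_in by blast
    define u0 where "u0 = Max U"
    obtain q where q: "q \<in> X" "w q = u0" "e < q" "Suc v \<le> u0" "u0 \<le> N" using u0U unfolding U_def u0_def by blast
    have "u0 \<noteq> N"
    proof
      assume "u0 = N"
      then have "q = m" using bij_inj[OF B q(1) m(1)] q m N_def by simp
      then show False using q me by simp
    qed
    then have "Suc u0 \<le> N" using q by simp
    then obtain q' where q': "q' \<in> X" "w q' = Suc u0" using bij_surj_val[OF B, of "Suc u0"] N_def by auto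
    have "Suc u0 \<notin> U" using Max_ge[OF fU] u0_def by fastforce
    then have "\<not> e < q'" unfolding U_def using q q' \<open>Suc u0 \<le> N\<close> by auto
    moreover have "q' \<noteq> e" using q' q v_def by auto
    ultimately have q'e: "q' < e" by simp
    have "brel (lrel X w) q' q" using br q q' q'e by simp
    then have "same_region J q' e \<or> same_region J e q" using ue q'e q unfolding uncov_def by blast
    then show False
    proof
      assume "same_region J q' e"
      then have "w q' < w e" using parabD[OF P q'(1) eX q'e] by blast
      then show False using q' q v_def by simp
    next
      assume "same_region J e q"
      then show False using re q unfolding rend_def by blast
    qed
  qed
qed


section \<open>Removal and insertion on the permutation side\<close>

lemma card_pos: "m \<in> X \<Longrightarrow> finite X \<Longrightarrow> card X > 0"
  using card_gt_0_iff by blast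

lemma bij_remove:
  assumes B: "bij_betw w X {1..card X}" and m: "m \<in> X" "w m = card X" and f: "finite X"
  shows "bij_betw (w(m:=m)) (X - {m}) {1..card (X - {m})}"
proof -
  have b1: "bij_betw w {m} {card X}" using m by (simp add: bij_betw_def)
  have "bij_betw w (X - {m}) ({1..card X} - {card X})"
    using bij_betw_DiffI[OF B b1] m bij_val[OF B m(1)] by auto
  moreover have "{1..card X} - {card X} = {1..card (X - {m})}" using m f by auto
  ultimately have "bij_betw w (X - {m}) {1..card (X - {m})}" by simp
  moreover have "\<And>a. a \<in> X - {m} \<Longrightarrow> (w(m:=m)) a = w a" by simp
  ultimately show ?thesis using bij_betw_cong[of "X - {m}" "w(m:=m)" w] by simp
qed

lemma bij_insert:
  assumes B: "bij_betw w' (X - {m}) {1..card (X - {m})}" and m: "m \<in> X" and f: "finite X"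
  shows "bij_betw (w'(m := card X)) X {1..card X}"
proof -
  have "\<And>a. a \<in> X - {m} \<Longrightarrow> (w'(m := card X)) a = w' a" by simp
  then have b1: "bij_betw (w'(m := card X)) (X - {m}) {1..card (X - {m})}"
    using B bij_betw_cong[of "X - {m}" "w'(m := card X)" w'] by simp
  have b2: "bij_betw (w'(m := card X)) {m} {card X}" by (simp add: bij_betw_def)
  have c: "card (X - {m}) = card X - 1" "card X \<ge> 1" using card_pos[OF m f] m f by auto
  have "bij_betw (w'(m := card X)) ((X - {m}) \<union> {m}) ({1..card (X - {m})} \<union> {card X})"
    by (rule bij_betw_combine[OF b1 b2]) (use c in auto)
  moreover have "(X - {m}) \<union> {m} = X" using m by auto
  moreover have "{1..card (X - {m})} \<union> {card X} = {1..card X}" using c by auto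
  ultimately show ?thesis by simp
qed

lemma SS_remove:
  assumes w: "w \<in> SS J X" and m: "m \<in> X" "w m = card X" and f: "finite X"
  shows "w(m:=m) \<in> SS J (X - {m})"
proof -
  have B: "bij_betw w X {1..card X}" and O: "\<And>x. x \<notin> X \<Longrightarrow> w x = x" and P: "parab J X w" and A: "av J X w"
    using SS_D[OF w] by auto
  have "parab J (X - {m}) (w(m:=m))" using P unfolding parab_def by auto
  moreover have "av J (X - {m}) (w(m:=m))" using A unfolding av_def by auto
  moreover have "\<forall>x. x \<notin> X - {m} \<longrightarrow> (w(m:=m)) x = x" using O by auto
  ultimately show ?thesis using bij_remove[OF B m f] unfolding SS_def by blast
qed

lemma lrel_remove:
  assumes B: "bij_betw w X {1..card X}" and m: "m \<in> X" "w m = card X"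
    and x: "x \<in> X" "x \<noteq> m" and y: "y \<in> X" "y \<noteq> m"
  shows "(x,y) \<in> lrel (X - {m}) (w(m:=m)) \<longleftrightarrow> (x,y) \<in> lrel X w"
proof -
  have vx: "w x < card X" using bij_val[OF B x(1)] bij_inj[OF B x(1) m(1)] x m by fastforce
  have vy: "w y < card X" using bij_val[OF B y(1)] bij_inj[OF B y(1) m(1)] y m by fastforce
  have lkeq: "lk (X - {m}) (w(m:=m)) v \<longleftrightarrow> lk X w v" if v: "Suc v < card X" for v
  proof
    assume "lk (X - {m}) (w(m:=m)) v"
    then show "lk X w v" unfolding lk_def by (metis DiffD1 DiffD2 fun_upd_other insertI1)
  next
    assume "lk X w v"
    then obtain a b where ab: "a\<in>X" "b\<in>X" "a<b" "w a = Suc v" "w b = v" unfolding lk_def by blast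
    have "a \<noteq> m" "b \<noteq> m" using ab m v by auto
    then show "lk (X - {m}) (w(m:=m)) v" unfolding lk_def using ab by (intro bexI[of _ a] bexI[of _ b]) auto
  qed
  have r: "(\<forall>v. min (w x) (w y) \<le> v \<and> v < max (w x) (w y) \<longrightarrow> lk (X - {m}) (w(m:=m)) v) \<longleftrightarrow>
        (\<forall>v. min (w x) (w y) \<le> v \<and> v < max (w x) (w y) \<longrightarrow> lk X w v)"
  proof -
    have "\<And>v. v < max (w x) (w y) \<Longrightarrow> Suc v < card X" using vx vy by (auto simp: max_def split: if_splits)
    then show ?thesis using lkeq by blast
  qed
  show ?thesis unfolding lrel_def using x y r by simp
qed

lemma SS_insert:
  assumes w': "w' \<in> SS J (X - {m})" and m: "m \<in> X" and f: "finite X" and r: "rend J X m"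
    and u: "uncov J (lrel (X - {m}) w') m"
  shows "w'(m := card X) \<in> SS J X"
proof -
  have B': "bij_betw w' (X - {m}) {1..card (X - {m})}" and O: "\<And>x. x \<notin> X - {m} \<Longrightarrow> w' x = x"
    and P: "parab J (X - {m}) w'" and A: "av J (X - {m}) w'" using SS_D[OF w'] by auto
  define W where "W = w'(m := card X)"
  have B: "bij_betw W X {1..card X}" using bij_insert[OF B' m f] W_def by simp
  have cX: "card (X - {m}) < card X" using card_pos[OF m f] m f by simp
  have Wo: "\<And>x. x \<noteq> m \<Longrightarrow> W x = w' x" using W_def by simp
  have Wm: "W m = card X" using W_def by simp
  have small: "\<And>x. x \<in> X \<Longrightarrow> x \<noteq> m \<Longrightarrow> W x < card X" using bij_val[OF B'] cX Wo by fastforce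
  have "parab J X W" unfolding parab_def
  proof (intro ballI impI)
    fix a b assume ab: "a \<in> X" "b \<in> X" "a < b" "same_region J a b"
    show "W a < W b"
    proof (cases "a = m")
      case True
      then show ?thesis using r ab unfolding rend_def by blast
    next
      case False
      show ?thesis
      proof (cases "b = m")
        case True
        then show ?thesis using small[OF ab(1) False] Wm by simp
      next
        case False2: False
        then show ?thesis using parabD[OF P, of a b] ab False Wo by simp
      qed
    qed
  qed
  moreover have "av J X W" unfolding av_def
  proof (intro ballI impI)
    fix i j k assume ijk: "i\<in>X" "j\<in>X" "k\<in>X" "i<j" "j<k" "\<not>same_region J i j" "\<not>same_region J j k"
      "\<not>same_region J i k" "W i = Suc (W k)"
    have bW: "\<And>x. x \<in> X \<Longrightarrow> W x \<le> card X" using bij_val[OF B] by blast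
    show "W j \<le> W i"
    proof (cases "i = m")
      case True then show ?thesis using bW[OF ijk(2)] Wm by simp
    next
      case Fi: False
      show ?thesis
      proof (cases "k = m")
        case True then show ?thesis using bW[OF ijk(1)] Wm ijk(9) by simp
      next
        case Fk: False
        show ?thesis
        proof (cases "j = m")
          case True
          have "brel (lrel (X - {m}) w') i k"
            using brel_lrel[OF B'] ijk Fi Fk Wo by auto
          then have "same_region J i m \<or> same_region J m k" using u ijk True unfolding uncov_def by blast
          then show ?thesis using ijk True by blast
        next
          case Fj: False
          then show ?thesis using avD[OF A, of i j k] ijk Fi Fk Fj Wo by simp
        qed
      qed
    qed
  qed
  moreover have "\<forall>x. x \<notin> X \<longrightarrow> W x = x" using O m W_def by auto
  ultimately show ?thesis using B unfolding SS_def W_def by blast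
qed


section \<open>Noncrossing relation side\<close>

lemma eqv_mem: "equiv X R \<Longrightarrow> (a,b) \<in> R \<Longrightarrow> a \<in> X \<and> b \<in> X"
  unfolding equiv_def by blast
lemma eqv_refl: "equiv X R \<Longrightarrow> a \<in> X \<Longrightarrow> (a,a) \<in> R"
  unfolding equiv_def refl_on_def by blast
lemma eqv_sym: "equiv X R \<Longrightarrow> (a,b) \<in> R \<Longrightarrow> (b,a) \<in> R"
  unfolding equiv_def sym_def by blast
lemma eqv_trans: "equiv X R \<Longrightarrow> (a,b) \<in> R \<Longrightarrow> (b,c) \<in> R \<Longrightarrow> (a,c) \<in> R"
  unfolding equiv_def trans_def by blast

lemma NCR_D:
  assumes "R \<in> NCR J X"
  shows "equiv X R" "\<And>a b. (a,b)\<in>R \<Longrightarrow> a\<noteq>b \<Longrightarrow> \<not>same_region J a b"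
    "\<And>i1 i2 j1 j2. brel R i1 i2 \<Longrightarrow> brel R j1 j2 \<Longrightarrow> i1<j1 \<Longrightarrow> j1<i2 \<Longrightarrow> i2<j2 \<Longrightarrow> same_region J i1 j1 \<or> same_region J i2 j1"
    "\<And>i1 i2 j1 j2. brel R i1 i2 \<Longrightarrow> brel R j1 j2 \<Longrightarrow> i1<j1 \<Longrightarrow> j1<j2 \<Longrightarrow> j2<i2 \<Longrightarrow> \<not>same_region J i1 j1"
  using assms unfolding NCR_def by blast+

lemma brel_mem: "equiv X R \<Longrightarrow> brel R a b \<Longrightarrow> a \<in> X \<and> b \<in> X \<and> a < b \<and> (a,b) \<in> R"
proof -
  assume E: "equiv X R" and b: "brel R a b"
  then have "a < b" "(a,b) \<in> R" unfolding brel_def by auto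
  then show ?thesis using eqv_mem[OF E] by blast
qed

lemma nb_right:
  assumes E: "equiv X R" and f: "finite X" and h: "(m,y) \<in> R" "m < y"
  shows "\<exists>c. brel R m c"
proof -
  define Z where "Z = {z. (m,z) \<in> R \<and> m < z}"
  have fZ: "finite Z" unfolding Z_def using f eqv_mem[OF E] by (auto intro: finite_subset[of _ X])
  have "y \<in> Z" using h Z_def by simp
  then have cZ: "Min Z \<in> Z" using fZ Min_in by blast
  have "brel R m (Min Z)" unfolding brel_def
  proof (intro conjI allI impI)
    show "m < Min Z" "(m, Min Z) \<in> R" using cZ Z_def by auto
  next
    fix c assume "m < c \<and> c < Min Z"
    then show "(m,c) \<notin> R" using Min_le[OF fZ, of c] Z_def by auto
  qed
  then show ?thesis by blast
qed

lemma nb_left: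
  assumes E: "equiv X R" and f: "finite X" and h: "(x,e) \<in> R" "x < e"
  shows "\<exists>a. brel R a e"
proof -
  define Z where "Z = {z. (z,e) \<in> R \<and> z < e}"
  have fZ: "finite Z" unfolding Z_def using f eqv_mem[OF E] by (auto intro: finite_subset[of _ X])
  have "x \<in> Z" using h Z_def by simp
  then have cZ: "Max Z \<in> Z" using fZ Max_in by blast
  have "brel R (Max Z) e" unfolding brel_def
  proof (intro conjI allI impI)
    show "Max Z < e" "(Max Z, e) \<in> R" using cZ Z_def by auto
  next
    fix c assume c: "Max Z < c \<and> c < e"
    show "(Max Z, c) \<notin> R"
    proof
      assume "(Max Z, c) \<in> R"
      then have "(c, e) \<in> R" using eqv_trans[OF E eqv_sym[OF E] ] cZ Z_def by blast
      then have "c \<in> Z" using c Z_def by simp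
      then show False using Max_ge[OF fZ, of c] c by simp
    qed
  qed
  then show ?thesis by blast
qed

lemma brel_uniq_left:
  assumes E: "equiv X R" and h: "brel R a b" "brel R a' b"
  shows "a = a'"
proof (rule ccontr)
  assume "a \<noteq> a'"
  then consider "a < a'" | "a' < a" by linarith
  then show False
  proof cases
    case 1
    have "(a,a') \<in> R" using h eqv_trans[OF E] eqv_sym[OF E] unfolding brel_def by blast
    then show False using h 1 unfolding brel_def by blast
  next
    case 2
    have "(a',a) \<in> R" using h eqv_trans[OF E] eqv_sym[OF E] unfolding brel_def by blast
    then show False using h 2 unfolding brel_def by blast
  qed
qed

lemma brel_uniq_right:
  assumes E: "equiv X R" and h: "brel R a b" "brel R a b'"
  shows "b = b'"
proof (rule ccontr)
  assume "b \<noteq> b'"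
  then consider "b < b'" | "b' < b" by linarith
  then show False
  proof cases
    case 1 then show False using h unfolding brel_def by blast
  next
    case 2 then show False using h unfolding brel_def by blast
  qed
qed

definition rendof :: "nat set \<Rightarrow> nat set \<Rightarrow> nat \<Rightarrow> nat" where
  "rendof J X a = Max {x\<in>X. same_region J a x}"

lemma rendof_props:
  assumes f: "finite X" and a: "a \<in> X"
  shows "a \<le> rendof J X a" "rendof J X a \<in> X" "same_region J a (rendof J X a)" "rend J X (rendof J X a)"
proof -
  let ?S = "{x\<in>X. same_region J a x}"
  have fS: "finite ?S" using f by simp
  have aS: "a \<in> ?S" using a by simp
  have mS: "Max ?S \<in> ?S" using Max_in[OF fS] aS by blast
  show "a \<le> rendof J X a" unfolding rendof_def using Max_ge[OF fS aS] .
  show "rendof J X a \<in> X" "same_region J a (rendof J X a)" using mS unfolding rendof_def by auto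
  show "rend J X (rendof J X a)" unfolding rend_def
  proof (intro conjI ballI impI notI)
    show "rendof J X a \<in> X" using mS unfolding rendof_def by auto
  next
    fix x assume x: "x \<in> X" "rendof J X a < x" "same_region J (rendof J X a) x"
    have "a \<le> rendof J X a" unfolding rendof_def using Max_ge[OF fS aS] .
    then have "same_region J a x" using sr_join[of a "rendof J X a" x J] x mS unfolding rendof_def by auto
    then have "x \<le> rendof J X a" unfolding rendof_def using Max_ge[OF fS] x by auto
    then show False using x by simp
  qed
qed

lemma uncov_prop:
  assumes R: "R \<in> NCR J X" and f: "finite X" and e: "rend J X e" "uncov J R e" and b: "brel R a e"
  shows "uncov J R (rendof J X a) \<and> rendof J X a < e"
proof -
  have E: "equiv X R" using NCR_D[OF R] by blast
  have aX: "a \<in> X" "a < e" "(a,e) \<in> R" using brel_mem[OF E b] by auto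
  have nae: "\<not> same_region J a e" using NCR_D(2)[OF R aX(3)] aX by simp
  define e1 where "e1 = rendof J X a"
  have P: "a \<le> e1" "e1 \<in> X" "same_region J a e1" using rendof_props[OF f aX(1)] e1_def by auto
  have "e1 < e"
  proof (rule ccontr)
    assume "\<not> e1 < e"
    then have "same_region J a e" using sr_left[of a e e1 J] P aX by simp
    then show False using nae by simp
  qed
  moreover have "uncov J R e1" unfolding uncov_def
  proof (intro allI impI)
    fix c d assume h: "brel R c d \<and> c < e1 \<and> e1 < d"
    show "same_region J c e1 \<or> same_region J e1 d"
    proof (rule ccontr)
      assume n: "\<not> (same_region J c e1 \<or> same_region J e1 d)"
      have dX: "d \<in> X" using brel_mem[OF E] h by blast
      have ca: "c < a"
      proof (rule ccontr)
        assume "\<not> c < a"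
        then have "same_region J c e1" using sr_right[of a c e1 J] P h by simp
        then show False using n by simp
      qed
      have nca: "\<not> same_region J c a" using sr_join[of c a e1 J] ca P n by auto
      have nad: "\<not> same_region J a d" using sr_right[of a e1 d J] P h n by auto
      consider "e < d" | "d = e" | "d < e" by linarith
      then show False
      proof cases
        case 1
        then have "same_region J c e \<or> same_region J e d" using e(2) h ca aX unfolding uncov_def by auto
        then show False
        proof
          assume "same_region J c e"
          then have "same_region J c a" using sr_left[of c a e J] ca aX by simp
          then show False using nca by simp
        next
          assume "same_region J e d"
          then show False using e(1) dX 1 unfolding rend_def by blast
        qed
      next
        case 2
        then have "c = a" using brel_uniq_left[OF E] h b by blast
        then show False using ca by simp
      next
        case 3
        have "a < d" using P h by simp
        then have "same_region J c a \<or> same_region J d a" using NCR_D(3)[OF R, of c d a e] h b ca 3 by blast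
        then show False using nca nad sr_sym by metis
      qed
    qed
  qed
  ultimately show ?thesis using e1_def by simp
qed

lemma cand_exists_below:
  assumes R: "R \<in> NCR J X" and f: "finite X"
  shows "rend J X e \<Longrightarrow> uncov J R e \<Longrightarrow> \<exists>e'. e' \<in> cand J X R \<and> e' \<le> e"
proof (induction e rule: less_induct)
  case (less e)
  have E: "equiv X R" using NCR_D[OF R] by blast
  show ?case
  proof (cases "bmin R e")
    case True
    then show ?thesis using less.prems unfolding cand_def by blast
  next
    case False
    then obtain x where "(x,e) \<in> R" "x < e" unfolding bmin_def by (auto simp: not_le)
    then obtain a where b: "brel R a e" using nb_left[OF E f] by blast
    have aX: "a \<in> X" using brel_mem[OF E b] by blast
    have u: "uncov J R (rendof J X a)" "rendof J X a < e" using uncov_prop[OF R f less.prems b] by auto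
    have "rend J X (rendof J X a)" using rendof_props[OF f aX] by blast
    then obtain e' where "e' \<in> cand J X R" "e' \<le> rendof J X a" using less.IH[OF u(2)] u(1) by blast
    then show ?thesis using u(2) by auto
  qed
qed

lemma cand_nonempty:
  assumes R: "R \<in> NCR J X" and f: "finite X" and ne: "X \<noteq> {}"
  shows "cand J X R \<noteq> {}" "finite (cand J X R)" "cand J X R \<subseteq> X"
proof -
  have E: "equiv X R" using NCR_D[OF R] by blast
  show cs: "cand J X R \<subseteq> X" unfolding cand_def rend_def by auto
  then show "finite (cand J X R)" using f finite_subset by blast
  have mX: "Max X \<in> X" using Max_in[OF f ne] .
  have "rend J X (Max X)" unfolding rend_def using mX Max_ge[OF f] by (meson leD)
  moreover have "uncov J R (Max X)" unfolding uncov_def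
    using brel_mem[OF E] Max_ge[OF f] by (metis not_le)
  ultimately show "cand J X R \<noteq> {}" using cand_exists_below[OF R f] by blast
qed

definition restr :: "(nat\<times>nat) set \<Rightarrow> nat \<Rightarrow> (nat\<times>nat) set" where
  "restr R m = {(x,y). (x,y) \<in> R \<and> x \<noteq> m \<and> y \<noteq> m}"

lemma brel_restr:
  assumes E: "equiv X R" and bm: "bmin R m"
  shows "brel (restr R m) a b \<longleftrightarrow> brel R a b \<and> a \<noteq> m"
proof
  assume h: "brel (restr R m) a b"
  have ab: "a < b" "(a,b) \<in> R" "a \<noteq> m" "b \<noteq> m" using h unfolding brel_def restr_def by auto
  have "(a,c) \<notin> R" if c: "a < c" "c < b" for c
  proof
    assume ac: "(a,c) \<in> R"
    show False
    proof (cases "c = m")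
      case True
      then have "m \<le> a" using bm ac unfolding bmin_def by blast
      then show False using c True by simp
    next
      case False
      then have "(a,c) \<in> restr R m" using ac ab unfolding restr_def by simp
      then show False using h c unfolding brel_def by blast
    qed
  qed
  then show "brel R a b \<and> a \<noteq> m" using ab unfolding brel_def by blast
next
  assume h: "brel R a b \<and> a \<noteq> m"
  have "b \<noteq> m"
  proof
    assume "b = m"
    then have "m \<le> a" using bm h unfolding bmin_def brel_def by blast
    then show False using h \<open>b = m\<close> unfolding brel_def by simp
  qed
  then show "brel (restr R m) a b" using h unfolding brel_def restr_def by auto
qed

lemma restr_NCR:
  assumes R: "R \<in> NCR J X" and m: "m \<in> X" and bm: "bmin R m"
  shows "restr R m \<in> NCR J (X - {m})"
proof -
  have E: "equiv X R" using NCR_D[OF R] by blast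
  have E': "equiv (X - {m}) (restr R m)"
  proof (rule equivI)
    show "restr R m \<subseteq> (X - {m}) \<times> (X - {m})" using eqv_mem[OF E] unfolding restr_def by auto
    show "refl_on (X - {m}) (restr R m)" unfolding refl_on_def restr_def using eqv_refl[OF E] by auto
    show "sym (restr R m)" unfolding sym_def restr_def using eqv_sym[OF E] by auto
    show "trans (restr R m)" unfolding trans_def restr_def using eqv_trans[OF E] by blast
  qed
  note br = brel_restr[OF E bm]
  show ?thesis unfolding NCR_def
  proof (intro CollectI conjI allI impI)
    show "equiv (X - {m}) (restr R m)" by (rule E')
  next
    fix a b assume "(a,b) \<in> restr R m" "a \<noteq> b"
    then show "\<not> same_region J a b" using NCR_D(2)[OF R] unfolding restr_def by auto
  next
    fix i1 i2 j1 j2 assume "brel (restr R m) i1 i2 \<and> brel (restr R m) j1 j2 \<and> i1 < j1 \<and> j1 < i2 \<and> i2 < j2"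
    then show "same_region J i1 j1 \<or> same_region J i2 j1" using NCR_D(3)[OF R] br by blast
  next
    fix i1 i2 j1 j2 assume "brel (restr R m) i1 i2 \<and> brel (restr R m) j1 j2 \<and> i1 < j1 \<and> j1 < j2 \<and> j2 < i2"
    then show "\<not> same_region J i1 j1" using NCR_D(4)[OF R] br by blast
  qed
qed


lemma cand_D:
  assumes "e \<in> cand J X R"
  shows "rend J X e" "bmin R e" "uncov J R e" "e \<in> X"
  using assms unfolding cand_def rend_def by auto

lemma toprec_chain:
  assumes R: "R \<in> NCR J X" and f: "finite X" and mc: "m \<in> cand J X R"
    and mx: "\<And>e. e \<in> cand J X R \<Longrightarrow> e \<le> m" and bc: "brel R m c"
  shows "rend J X y \<Longrightarrow> uncov J R y \<Longrightarrow> m < y \<Longrightarrow> c \<le> y \<and> rend J X c"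
proof (induction y rule: less_induct)
  case (less y)
  have E: "equiv X R" using NCR_D[OF R] by blast
  note mD = cand_D[OF mc]
  have yX: "y \<in> X" using less.prems unfolding rend_def by blast
  have "y \<notin> cand J X R" using mx less.prems(3) by (meson leD)
  then have "\<not> bmin R y" using less.prems unfolding cand_def by blast
  then obtain x where "(x,y) \<in> R" "x < y" unfolding bmin_def by (auto simp: not_le)
  then obtain a where b: "brel R a y" using nb_left[OF E f] by blast
  have aX: "a \<in> X" "a < y" using brel_mem[OF E b] by auto
  define e1 where "e1 = rendof J X a"
  have u: "uncov J R e1" "e1 < y" using uncov_prop[OF R f less.prems(1,2) b] e1_def by auto
  have re1: "rend J X e1" "a \<le> e1" using rendof_props[OF f aX(1)] e1_def by auto
  have cX: "c \<in> X" "m < c" using brel_mem[OF E bc] by auto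
  show ?case
  proof (cases "m < e1")
    case True
    then show ?thesis using less.IH[OF u(2) re1(1) u(1) True] u(2) by simp
  next
    case False
    show ?thesis
    proof (cases "a = m")
      case True
      then have "y = c" using brel_uniq_right[OF E] b bc by blast
      then show ?thesis using less.prems by simp
    next
      case False2: False
      then have am: "a < m" using False re1(2) by simp
      have "same_region J a m \<or> same_region J m y" using mD(3) b am less.prems(3) unfolding uncov_def by blast
      moreover have "\<not> same_region J m y" using mD(1) yX less.prems(3) unfolding rend_def by blast
      ultimately have sam: "same_region J a m" by blast
      consider "c < y" | "y = c" | "y < c" by linarith
      then show ?thesis
      proof cases
        case 1
        then have "\<not> same_region J a m" using NCR_D(4)[OF R b bc am cX(2)] by blast
        then show ?thesis using sam by blast
      next
        case 2
        then show ?thesis using less.prems by simp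
      next
        case 3
        then have "same_region J m y \<or> same_region J y c" using less.prems(2) bc less.prems(3) unfolding uncov_def by blast
        moreover have "\<not> same_region J y c" using less.prems(1) cX 3 unfolding rend_def by blast
        ultimately show ?thesis using \<open>\<not> same_region J m y\<close> by blast
      qed
    qed
  qed
qed

lemma toprec_some:
  assumes R: "R \<in> NCR J X" and f: "finite X" and mc: "m \<in> cand J X R"
    and mx: "\<And>e. e \<in> cand J X R \<Longrightarrow> e \<le> m" and bc: "brel R m c"
  shows "c \<in> cand J (X - {m}) (restr R m)" and "\<And>e. e \<in> cand J (X - {m}) (restr R m) \<Longrightarrow> e \<le> c"
proof -
  have E: "equiv X R" using NCR_D[OF R] by blast
  note mD = cand_D[OF mc]
  note br = brel_restr[OF E mD(2)]
  have cX: "c \<in> X" "m < c" "(m,c) \<in> R" using brel_mem[OF E bc] by auto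
  define x where "x = rendof J X c"
  have P: "c \<le> x" "x \<in> X" "same_region J c x" "rend J X x" using rendof_props[OF f cX(1)] x_def by auto
  have ux: "uncov J R x" unfolding uncov_def
  proof (intro allI impI)
    fix a b assume h: "brel R a b \<and> a < x \<and> x < b"
    show "same_region J a x \<or> same_region J x b"
    proof (rule ccontr)
      assume n: "\<not> (same_region J a x \<or> same_region J x b)"
      have ab: "a \<in> X" "b \<in> X" using brel_mem[OF E] h by blast+
      have ac: "a < c"
      proof (rule ccontr)
        assume "\<not> a < c"
        then have "same_region J a x" using sr_right[of c a x J] P h by simp
        then show False using n by simp
      qed
      have nac: "\<not> same_region J a c" using sr_join[of a c x J] ac P n by auto
      consider "m < a" | "a = m" | "a < m" by linarith
      then show False
      proof cases
        case 1
        then have "same_region J m a \<or> same_region J c a" using NCR_D(3)[OF R bc, of a b] h ac P by auto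
        moreover have "\<not> same_region J m a" using mD(1) ab 1 unfolding rend_def by blast
        ultimately show False using nac sr_sym by metis
      next
        case 2
        then have "b = c" using brel_uniq_right[OF E] h bc by blast
        then show False using h P by simp
      next
        case 3
        have "m < b" using cX P h by simp
        then have "same_region J a m \<or> same_region J m b" using mD(3) h 3 unfolding uncov_def by blast
        moreover have "\<not> same_region J m b" using mD(1) ab \<open>m < b\<close> unfolding rend_def by blast
        moreover have "\<not> same_region J a m" using NCR_D(4)[OF R, of a b m c] h bc 3 cX P by auto
        ultimately show False by blast
      qed
    qed
  qed
  have rc: "rend J X c" using toprec_chain[OF R f mc mx bc P(4) ux] cX P by simp
  have "rend J (X - {m}) c" using rc cX unfolding rend_def by auto
  moreover have "bmin (restr R m) c" unfolding bmin_def
  proof (intro allI impI)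
    fix z assume "(z,c) \<in> restr R m"
    then have z: "(z,c) \<in> R" "z \<noteq> m" unfolding restr_def by auto
    show "c \<le> z"
    proof (rule ccontr)
      assume "\<not> c \<le> z"
      then have zc: "z < c" by simp
      have "(m,z) \<in> R" using eqv_trans[OF E cX(3) eqv_sym[OF E z(1)]] .
      then have "m \<le> z" using mD(2) eqv_sym[OF E] unfolding bmin_def by blast
      then have "m < z" using z by simp
      then show False using bc zc \<open>(m,z) \<in> R\<close> unfolding brel_def by blast
    qed
  qed
  moreover have "uncov J (restr R m) c" unfolding uncov_def
  proof (intro allI impI)
    fix a b assume h: "brel (restr R m) a b \<and> a < c \<and> c < b"
    then have b: "brel R a b" "a \<noteq> m" using br by auto
    have ab: "a \<in> X" "b \<in> X" using brel_mem[OF E b(1)] by auto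
    show "same_region J a c \<or> same_region J c b"
    proof (rule ccontr)
      assume n: "\<not> (same_region J a c \<or> same_region J c b)"
      consider "m < a" | "a < m" using b by linarith
      then show False
      proof cases
        case 1
        then have "same_region J m a \<or> same_region J c a" using NCR_D(3)[OF R bc b(1)] h by auto
        moreover have "\<not> same_region J m a" using mD(1) ab 1 unfolding rend_def by blast
        ultimately show False using n sr_sym by metis
      next
        case 2
        have "m < b" using cX h by simp
        then have "same_region J a m \<or> same_region J m b" using mD(3) b 2 unfolding uncov_def by blast
        moreover have "\<not> same_region J m b" using mD(1) ab \<open>m < b\<close> unfolding rend_def by blast
        moreover have "\<not> same_region J a m" using NCR_D(4)[OF R b(1) bc 2 cX(2)] h by auto
        ultimately show False by blast
      qed
    qed
  qed
  ultimately show "c \<in> cand J (X - {m}) (restr R m)" unfolding cand_def by blast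
  fix e assume e: "e \<in> cand J (X - {m}) (restr R m)"
  note eD = cand_D[OF e]
  show "e \<le> c"
  proof (rule ccontr)
    assume "\<not> e \<le> c"
    then have ce: "c < e" by simp
    have "rend J X e" unfolding rend_def
    proof (intro conjI ballI impI notI)
      show "e \<in> X" using eD by simp
    next
      fix z assume z: "z \<in> X" "e < z" "same_region J e z"
      then have "z \<noteq> m" using ce cX by simp
      then show False using eD(1) z unfolding rend_def by blast
    qed
    moreover have "bmin R e" unfolding bmin_def
    proof (intro allI impI)
      fix z assume z: "(z,e) \<in> R"
      show "e \<le> z"
      proof (cases "z = m")
        case True
        have "(c,e) \<in> R" using eqv_trans[OF E eqv_sym[OF E cX(3)]] z True by blast
        then have "(c,e) \<in> restr R m" using cX eD unfolding restr_def by auto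
        then have "e \<le> c" using eD(2) unfolding bmin_def by blast
        then show ?thesis using ce by simp
      next
        case False
        then have "(z,e) \<in> restr R m" using z eD unfolding restr_def by auto
        then show ?thesis using eD(2) unfolding bmin_def by blast
      qed
    qed
    moreover have "uncov J R e" unfolding uncov_def
    proof (intro allI impI)
      fix a b assume h: "brel R a b \<and> a < e \<and> e < b"
      show "same_region J a e \<or> same_region J e b"
      proof (cases "a = m")
        case True
        then have "b = c" using brel_uniq_right[OF E] h bc by blast
        then show ?thesis using h ce by simp
      next
        case False
        then have "brel (restr R m) a b" using br h by blast
        then show ?thesis using eD(3) h unfolding uncov_def by blast
      qed
    qed
    ultimately have "e \<in> cand J X R" unfolding cand_def by blast
    then have "e \<le> m" using mx by blast
    then show False using ce cX by simp
  qed
qed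

lemma toprec_none:
  assumes R: "R \<in> NCR J X" and f: "finite X" and mc: "m \<in> cand J X R"
    and mx: "\<And>e. e \<in> cand J X R \<Longrightarrow> e \<le> m" and nc: "\<not> (\<exists>c. brel R m c)"
    and e: "e \<in> cand J (X - {m}) (restr R m)"
  shows "e < m"
proof (rule ccontr)
  assume "\<not> e < m"
  have E: "equiv X R" using NCR_D[OF R] by blast
  note mD = cand_D[OF mc]
  note br = brel_restr[OF E mD(2)]
  note eD = cand_D[OF e]
  have me: "m < e" using eD \<open>\<not> e < m\<close> by auto
  have "rend J X e" unfolding rend_def
  proof (intro conjI ballI impI notI)
    show "e \<in> X" using eD by simp
  next
    fix z assume z: "z \<in> X" "e < z" "same_region J e z"
    then have "z \<noteq> m" using me by simp
    then show False using eD(1) z unfolding rend_def by blast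
  qed
  moreover have "bmin R e" unfolding bmin_def
  proof (intro allI impI)
    fix z assume z: "(z,e) \<in> R"
    show "e \<le> z"
    proof (cases "z = m")
      case True
      then have "\<exists>c. brel R m c" using nb_right[OF E f, of m e] z me by blast
      then show ?thesis using nc by blast
    next
      case False
      then have "(z,e) \<in> restr R m" using z eD unfolding restr_def by auto
      then show ?thesis using eD(2) unfolding bmin_def by blast
    qed
  qed
  moreover have "uncov J R e" unfolding uncov_def
  proof (intro allI impI)
    fix a b assume h: "brel R a b \<and> a < e \<and> e < b"
    then have "a \<noteq> m" using nc by blast
    then have "brel (restr R m) a b" using br h by blast
    then show "same_region J a e \<or> same_region J e b" using eD(3) h unfolding uncov_def by blast
  qed
  ultimately have "e \<in> cand J X R" unfolding cand_def by blast
  then show False using mx me by fastforce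
qed


lemma SS_empty: "SS J {} = {id}"
proof -
  have "w \<in> SS J {} \<longleftrightarrow> w = id" for w
  proof
    assume "w \<in> SS J {}"
    then show "w = id" unfolding SS_def by (auto simp: fun_eq_iff)
  next
    assume "w = id"
    then show "w \<in> SS J {}" unfolding SS_def parab_def av_def by (simp add: bij_betw_def)
  qed
  then show ?thesis by blast
qed

lemma NCR_empty: "NCR J {} = {{}}"
proof -
  have "R \<in> NCR J {} \<longleftrightarrow> R = {}" for R
  proof
    assume "R \<in> NCR J {}"
    then have "equiv {} R" using NCR_D by blast
    then show "R = {}" unfolding equiv_def by blast
  next
    assume "R = {}"
    then show "R \<in> NCR J {}" unfolding NCR_def brel_def by (simp add: equiv_def refl_on_def sym_def trans_def)
  qed
  then show ?thesis by blast
qed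

lemma main_bij:
  "finite X \<Longrightarrow> bij_betw (lrel X) (SS J X) (NCR J X)"
proof (induction "card X" arbitrary: X rule: less_induct)
  case less
  show ?case
  proof (cases "X = {}")
    case True
    have "lrel {} id = {}" unfolding lrel_def by auto
    then show ?thesis using True SS_empty NCR_empty by (simp add: bij_betw_def)
  next
    case False
    have f: "finite X" by (rule less.prems)
    have c1: "1 \<le> card X" using f False by (simp add: Suc_le_eq card_gt_0_iff)
    have into: "lrel X ` SS J X \<subseteq> NCR J X" using SS_NCR by blast
    have topw: "\<exists>m. m \<in> X \<and> w m = card X" if "w \<in> SS J X" for w
      using bij_surj_val[OF SS_D(1)[OF that], of "card X"] c1 by auto
    have inj: "inj_on (lrel X) (SS J X)"
    proof (rule inj_onI)
      fix w1 w2 assume w1: "w1 \<in> SS J X" and w2: "w2 \<in> SS J X" and eq: "lrel X w1 = lrel X w2"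
      obtain m1 where m1: "m1 \<in> X" "w1 m1 = card X" using topw[OF w1] by blast
      obtain m2 where m2: "m2 \<in> X" "w2 m2 = card X" using topw[OF w2] by blast
      have "m2 \<le> m1" using SS_top(2)[OF w1 m1] SS_top(1)[OF w2 m2] eq by simp
      moreover have "m1 \<le> m2" using SS_top(2)[OF w2 m2] SS_top(1)[OF w1 m1] eq by simp
      ultimately have m12: "m1 = m2" by simp
      define m where "m = m1"
      have mm: "m \<in> X" "w1 m = card X" "w2 m = card X" using m1 m2 m12 m_def by auto
      have B1: "bij_betw w1 X {1..card X}" and B2: "bij_betw w2 X {1..card X}" using SS_D(1) w1 w2 by auto
      have s1: "w1(m:=m) \<in> SS J (X - {m})" using SS_remove[OF w1 mm(1,2) f] .
      have s2: "w2(m:=m) \<in> SS J (X - {m})" using SS_remove[OF w2 mm(1,3) f] .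
      have pe: "(x,y) \<in> lrel (X - {m}) (w1(m:=m)) \<longleftrightarrow> (x,y) \<in> lrel (X - {m}) (w2(m:=m))" for x y
      proof (cases "x \<in> X \<and> x \<noteq> m \<and> y \<in> X \<and> y \<noteq> m")
        case True
        then show ?thesis using lrel_remove[OF B1 mm(1,2)] lrel_remove[OF B2 mm(1,3)] eq by simp
      next
        case False
        then show ?thesis using lrel_mem by blast
      qed
      have "lrel (X - {m}) (w1(m:=m)) = lrel (X - {m}) (w2(m:=m))"
        using pe by (simp add: set_eq_iff split_paired_All)
      moreover have "card (X - {m}) < card X" using card_pos[OF mm(1) f] mm(1) f by simp
      ultimately have "w1(m:=m) = w2(m:=m)"
        using less.hyps[of "X - {m}"] f s1 s2 unfolding bij_betw_def inj_on_def by blast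
      then show "w1 = w2" using mm by (metis fun_upd_idem_iff fun_upd_upd)
    qed
    have surj: "NCR J X \<subseteq> lrel X ` SS J X"
    proof
      fix R assume R: "R \<in> NCR J X"
      have E: "equiv X R" using NCR_D[OF R] by blast
      note cn = cand_nonempty[OF R f False]
      define m where "m = Max (cand J X R)"
      have mc: "m \<in> cand J X R" using Max_in cn m_def by blast
      have mx: "\<And>e. e \<in> cand J X R \<Longrightarrow> e \<le> m" using Max_ge cn m_def by blast
      note mD = cand_D[OF mc]
      define R' where "R' = restr R m"
      have R': "R' \<in> NCR J (X - {m})" using restr_NCR[OF R mD(4) mD(2)] R'_def by simp
      have cl: "card (X - {m}) < card X" using card_pos[OF mD(4) f] mD(4) f by simp
      have bj: "bij_betw (lrel (X - {m})) (SS J (X - {m})) (NCR J (X - {m}))" using less.hyps[OF cl] f by simp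
      have "R' \<in> lrel (X - {m}) ` SS J (X - {m})" using bij_betw_imp_surj_on[OF bj] R' by simp
      then obtain w' where w': "w' \<in> SS J (X - {m})" "lrel (X - {m}) w' = R'" by (metis imageE)
      have ucw: "uncov J (lrel (X - {m}) w') m" unfolding uncov_def
      proof (intro allI impI)
        fix a b assume "brel (lrel (X - {m}) w') a b \<and> a < m \<and> m < b"
        then have "brel R a b \<and> a < m \<and> m < b" using brel_restr[OF E mD(2)] w'(2) R'_def by auto
        then show "same_region J a m \<or> same_region J m b" using mD(3) unfolding uncov_def by blast
      qed
      define w where "w = w'(m := card X)"
      have wS: "w \<in> SS J X" using SS_insert[OF w'(1) mD(4) f mD(1) ucw] w_def by simp
      have B: "bij_betw w X {1..card X}" using SS_D(1)[OF wS] .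
      have wm: "w m = card X" using w_def by simp
      have w'm: "w' m = m" using SS_D(2)[OF w'(1)] by simp
      have wr: "w(m:=m) = w'" using w_def w'm by (auto simp: fun_eq_iff)
      have key_xy: "(x,y) \<in> lrel X w \<longleftrightarrow> (x,y) \<in> R"
        if xy: "x \<in> X" "x \<noteq> m" "y \<in> X" "y \<noteq> m" for x y
        using lrel_remove[OF B mD(4) wm xy] wr w'(2) xy unfolding R'_def restr_def by auto
      have key_m: "(m,y) \<in> lrel X w \<longleftrightarrow> (m,y) \<in> R" if y: "y \<in> X" "y \<noteq> m" for y
      proof -
        have cpos: "card (X - {m}) \<ge> 1" using y f by (simp add: Suc_le_eq card_gt_0_iff) blast
        obtain t where t: "t \<in> X - {m}" "w' t = card (X - {m})"
          using bij_surj_val[OF SS_D(1)[OF w'(1)], of "card (X - {m})"] cpos by auto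
        have tc: "t \<in> cand J (X - {m}) R'" "\<And>e. e \<in> cand J (X - {m}) R' \<Longrightarrow> e \<le> t"
          using SS_top[OF w'(1) t] w'(2) by auto
        have cardX: "card (X - {m}) = card X - 1" using mD(4) f by simp
        have wt: "w t = card X - 1" "t \<in> X" "t \<noteq> m" using t w_def cardX by auto
        have c2: "card X \<ge> 2" using cpos cardX by simp
        have L: "(m,y) \<in> lrel X w \<longleftrightarrow> m < t \<and> (t,y) \<in> R'"
        proof
          assume h: "(m,y) \<in> lrel X w"
          have "w y \<noteq> card X" using bij_inj[OF B y(1) mD(4)] wm y by auto
          then have wy: "w y \<le> card X - 1" using bij_val[OF B y(1)] by linarith
          have mt: "(m,t) \<in> lrel X w" using lrel_sub[OF h wt(2)] wy wm wt c2 by simp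
          have "m < t" using lrel_dec[OF B lrel_sym[OF mt]] wt wm c2 by simp
          moreover have "(t,y) \<in> lrel X w" using lrel_trans[OF lrel_sym[OF mt] h] .
          then have "(t,y) \<in> R" using key_xy wt y by blast
          then have "(t,y) \<in> R'" using wt y unfolding R'_def restr_def by simp
          ultimately show "m < t \<and> (t,y) \<in> R'" by simp
        next
          assume h: "m < t \<and> (t,y) \<in> R'"
          have "brel (lrel X w) m t" using brel_lrel[OF B] mD(4) wt h wm c2 by simp
          then have "(m,t) \<in> lrel X w" by (simp add: brel_def)
          moreover have "(t,y) \<in> lrel X w" using key_xy wt y h unfolding R'_def restr_def by simp
          ultimately show "(m,y) \<in> lrel X w" using lrel_trans by blast
        qed
        have Rr: "(m,y) \<in> R \<longleftrightarrow> (\<exists>c. brel R m c \<and> (c,y) \<in> R')"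
        proof
          assume h: "(m,y) \<in> R"
          have "m \<le> y" using mD(2) eqv_sym[OF E h] unfolding bmin_def by blast
          then have "m < y" using y by simp
          then obtain c where c: "brel R m c" using nb_right[OF E f h] by blast
          have cm: "(m,c) \<in> R" "m < c" using c unfolding brel_def by auto
          have "(c,y) \<in> R" using eqv_trans[OF E eqv_sym[OF E cm(1)] h] .
          then have "(c,y) \<in> R'" using cm y unfolding R'_def restr_def by simp
          then show "\<exists>c. brel R m c \<and> (c,y) \<in> R'" using c by blast
        next
          assume "\<exists>c. brel R m c \<and> (c,y) \<in> R'"
          then obtain c where c: "brel R m c" "(c,y) \<in> R'" by blast
          then show "(m,y) \<in> R" using eqv_trans[OF E] unfolding brel_def R'_def restr_def by blast
        qed
        show ?thesis
        proof (cases "\<exists>c. brel R m c")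
          case True
          then obtain c where c: "brel R m c" by blast
          have cc: "c \<in> cand J (X - {m}) R'" "\<And>e. e \<in> cand J (X - {m}) R' \<Longrightarrow> e \<le> c"
            using toprec_some[OF R f mc mx c] R'_def by auto
          have "t = c" using cc tc by (meson antisym)
          have "m < c" using c unfolding brel_def by simp
          have "(\<exists>c'. brel R m c' \<and> (c',y) \<in> R') \<longleftrightarrow> (c,y) \<in> R'"
            using brel_uniq_right[OF E c] c by blast
          then show ?thesis using L Rr \<open>t = c\<close> \<open>m < c\<close> by simp
        next
          case False
          then have "t < m" using toprec_none[OF R f mc mx False] tc(1) R'_def by simp
          then show ?thesis using L Rr False by auto
        qed
      qed
      have pe: "(x,y) \<in> lrel X w \<longleftrightarrow> (x,y) \<in> R" for x y
      proof (cases "x \<in> X \<and> y \<in> X")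
        case False
        then show ?thesis using lrel_mem eqv_mem[OF E] by blast
      next
        case True
        show ?thesis
        proof (cases "x = m")
          case xm: True
          show ?thesis
          proof (cases "y = m")
            case True
            then show ?thesis using xm lrel_refl eqv_refl[OF E] mD(4) by blast
          next
            case False
            then show ?thesis using key_m True xm by blast
          qed
        next
          case xm: False
          show ?thesis
          proof (cases "y = m")
            case True
            have "(x,m) \<in> lrel X w \<longleftrightarrow> (m,x) \<in> lrel X w" using lrel_sym by blast
            moreover have "(x,m) \<in> R \<longleftrightarrow> (m,x) \<in> R" using eqv_sym[OF E] by blast
            ultimately show ?thesis using key_m[of x] True xm \<open>x \<in> X \<and> y \<in> X\<close> by simp
          next
            case False
            then show ?thesis using key_xy True xm by blast
          qed
        qed
      qed
      have "lrel X w = R" using pe by (simp add: set_eq_iff split_paired_All)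
      then show "R \<in> lrel X ` SS J X" using wS by blast
    qed
    show ?thesis unfolding bij_betw_def using inj into surj by blast
  qed
qed


section \<open>Transfer to the original formulation\<close>

lemma chain_lt: "(\<forall>k. a \<le> k \<and> k < b \<longrightarrow> w k < w (Suc k)) \<Longrightarrow> a < b \<Longrightarrow> w a < (w b :: nat)"
proof (induction b)
  case 0 then show ?case by simp
next
  case (Suc b)
  show ?case
  proof (cases "a = b")
    case True then show ?thesis using Suc.prems by simp
  next
    case False
    then have ab: "a < b" using Suc.prems by simp
    then have "w a < w b" using Suc.IH Suc.prems by simp
    moreover have "w b < w (Suc b)" using Suc.prems ab by simp
    ultimately show ?thesis by simp
  qed
qed

lemma parab_iff:
  assumes J: "J \<subseteq> {1..<n}"
  shows "(\<forall>i\<in>J. w i < w (Suc i)) \<longleftrightarrow> parab J {1..n} w"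
proof
  assume h: "\<forall>i\<in>J. w i < w (Suc i)"
  show "parab J {1..n} w" unfolding parab_def
  proof (intro ballI impI)
    fix a b assume ab: "a \<in> {1..n}" "b \<in> {1..n}" "a < b" "same_region J a b"
    then have "\<forall>k. a \<le> k \<and> k < b \<longrightarrow> k \<in> J" using sr_iff[of a b J] by simp
    then have "\<forall>k. a \<le> k \<and> k < b \<longrightarrow> w k < w (Suc k)" using h by blast
    then show "w a < w b" using chain_lt ab(3) by blast
  qed
next
  assume h: "parab J {1..n} w"
  show "\<forall>i\<in>J. w i < w (Suc i)"
  proof
    fix i assume i: "i \<in> J"
    then have iX: "i \<in> {1..n}" "Suc i \<in> {1..n}" using J by auto
    have "\<forall>k. i \<le> k \<and> k < Suc i \<longrightarrow> k \<in> J" using i by (metis le_antisym less_Suc_eq_le)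
    then have "same_region J i (Suc i)" by (simp add: sr_iff)
    then show "w i < w (Suc i)" using h iX unfolding parab_def by simp
  qed
qed

lemma par_eq:
  assumes J: "J \<subseteq> {1..<n}"
  shows "parabolic_231 n J = SS J {1..n}"
proof (rule set_eqI)
  fix w
  have perm: "w permutes {1..n} \<longleftrightarrow> bij_betw w {1..n} {1..card {1..n}} \<and> (\<forall>x. x \<notin> {1..n} \<longrightarrow> w x = x)"
    using permutes_imp_bij permutes_not_in bij_imp_permutes by fastforce
  have av: "(\<not> (\<exists>i j k. 1 \<le> i \<and> i < j \<and> j < k \<and> k \<le> n \<and>
            \<not> same_region J i j \<and> \<not> same_region J j k \<and> \<not> same_region J i k \<and>
            w k < w i \<and> w i < w j \<and> w i = w k + 1)) \<longleftrightarrow> av J {1..n} w"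
  proof
    assume h: "\<not> (\<exists>i j k. 1 \<le> i \<and> i < j \<and> j < k \<and> k \<le> n \<and>
            \<not> same_region J i j \<and> \<not> same_region J j k \<and> \<not> same_region J i k \<and>
            w k < w i \<and> w i < w j \<and> w i = w k + 1)"
    show "av J {1..n} w" unfolding av_def
    proof (intro ballI impI)
      fix i j k assume a: "i \<in> {1..n}" "j \<in> {1..n}" "k \<in> {1..n}" "i<j" "j<k" "\<not>same_region J i j"
        "\<not>same_region J j k" "\<not>same_region J i k" "w i = Suc (w k)"
      show "w j \<le> w i"
      proof (rule ccontr)
        assume "\<not> w j \<le> w i"
        then have "1 \<le> i \<and> i < j \<and> j < k \<and> k \<le> n \<and>
            \<not> same_region J i j \<and> \<not> same_region J j k \<and> \<not> same_region J i k \<and>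
            w k < w i \<and> w i < w j \<and> w i = w k + 1" using a by auto
        then show False using h by blast
      qed
    qed
  next
    assume h: "av J {1..n} w"
    show "\<not> (\<exists>i j k. 1 \<le> i \<and> i < j \<and> j < k \<and> k \<le> n \<and>
            \<not> same_region J i j \<and> \<not> same_region J j k \<and> \<not> same_region J i k \<and>
            w k < w i \<and> w i < w j \<and> w i = w k + 1)"
    proof
      assume "\<exists>i j k. 1 \<le> i \<and> i < j \<and> j < k \<and> k \<le> n \<and>
            \<not> same_region J i j \<and> \<not> same_region J j k \<and> \<not> same_region J i k \<and>
            w k < w i \<and> w i < w j \<and> w i = w k + 1"
      then obtain i j k where a: "1 \<le> i" "i < j" "j < k" "k \<le> n"
            "\<not> same_region J i j" "\<not> same_region J j k" "\<not> same_region J i k"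
            "w k < w i" "w i < w j" "w i = w k + 1" by blast
      have "w j \<le> w i" using avD[OF h, of i j k] a by simp
      then show False using a by simp
    qed
  qed
  show "w \<in> parabolic_231 n J \<longleftrightarrow> w \<in> SS J {1..n}"
    unfolding parabolic_231_def parabolic_def SS_def using perm av parab_iff[OF J, of w] by auto
qed

definition prel :: "nat set set \<Rightarrow> (nat \<times> nat) set" where
  "prel P = {(x, y). \<exists>p \<in> P. x \<in> p \<and> y \<in> p}"

lemma prel_quot:
  assumes E: "equiv X R" shows "prel (X // R) = R"
proof -
  have "(x,y) \<in> prel (X // R) \<longleftrightarrow> (x,y) \<in> R" for x y
  proof
    assume "(x,y) \<in> prel (X // R)"
    then obtain p where p: "p \<in> X // R" "x \<in> p" "y \<in> p" unfolding prel_def by blast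
    then obtain z where "z \<in> X" "p = R `` {z}" by (metis quotientE)
    then have "(z,x) \<in> R" "(z,y) \<in> R" using p by auto
    then show "(x,y) \<in> R" using eqv_trans[OF E eqv_sym[OF E]] by blast
  next
    assume h: "(x,y) \<in> R"
    have xX: "x \<in> X" using eqv_mem[OF E h] by blast
    have "R `` {x} \<in> X // R" using xX by (rule quotientI)
    moreover have "x \<in> R `` {x}" using eqv_refl[OF E xX] by simp
    moreover have "y \<in> R `` {x}" using h by simp
    ultimately show "(x,y) \<in> prel (X // R)" unfolding prel_def by blast
  qed
  then show ?thesis by (simp add: set_eq_iff split_paired_All)
qed

lemma bump_brel:
  assumes P: "partition_on X P"
  shows "bump P a b \<longleftrightarrow> brel (prel P) a b"
proof -
  have dj: "\<And>B B'. B \<in> P \<Longrightarrow> B' \<in> P \<Longrightarrow> B \<noteq> B' \<Longrightarrow> B \<inter> B' = {}"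
    using partition_onD2[OF P] unfolding disjoint_def by blast
  show ?thesis
  proof
    assume "bump P a b"
    then obtain B where B: "a < b" "B \<in> P" "a \<in> B" "b \<in> B" "\<not> (\<exists>c\<in>B. a < c \<and> c < b)"
      unfolding bump_def by blast
    have "(a,c) \<notin> prel P" if c: "a < c" "c < b" for c
    proof
      assume "(a,c) \<in> prel P"
      then obtain B' where B': "B' \<in> P" "a \<in> B'" "c \<in> B'" unfolding prel_def by blast
      then have "B' = B" using dj B by blast
      then show False using B B' c by blast
    qed
    then show "brel (prel P) a b" unfolding brel_def prel_def using B by blast
  next
    assume h: "brel (prel P) a b"
    then obtain B where B: "a < b" "B \<in> P" "a \<in> B" "b \<in> B" unfolding brel_def prel_def by blast
    have "\<not> (\<exists>c\<in>B. a < c \<and> c < b)"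
    proof
      assume "\<exists>c\<in>B. a < c \<and> c < b"
      then obtain c where "c \<in> B" "a < c" "c < b" by blast
      then have "(a,c) \<in> prel P" unfolding prel_def using B by blast
      then show False using h \<open>a < c\<close> \<open>c < b\<close> unfolding brel_def by blast
    qed
    then show "bump P a b" unfolding bump_def using B by blast
  qed
qed

lemma nc_char:
  assumes P: "partition_on {1..n} P"
  shows "P \<in> noncrossing_J n J \<longleftrightarrow> prel P \<in> NCR J {1..n}"
proof -
  have E: "equiv {1..n} (prel P)" using equiv_partition_on[OF P] unfolding prel_def .
  have nc1: "(\<forall>B\<in>P. \<forall>a\<in>B. \<forall>b\<in>B. a \<noteq> b \<longrightarrow> \<not> same_region J a b) \<longleftrightarrow>
     (\<forall>a b. (a,b)\<in>prel P \<longrightarrow> a\<noteq>b \<longrightarrow> \<not>same_region J a b)" unfolding prel_def by blast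
  have nc2: "(\<forall>i1 i2 j1 j2. bump P i1 i2 \<and> bump P j1 j2 \<and> (i1, i2) \<noteq> (j1, j2) \<and>
         i1 < j1 \<and> j1 < i2 \<and> i2 < j2 \<longrightarrow> same_region J i1 j1 \<or> same_region J i2 j1) \<longleftrightarrow>
      (\<forall>i1 i2 j1 j2. brel (prel P) i1 i2 \<and> brel (prel P) j1 j2 \<and> i1<j1 \<and> j1<i2 \<and> i2<j2 \<longrightarrow> same_region J i1 j1 \<or> same_region J i2 j1)"
    by (auto simp: bump_brel[OF P])
  have nc3: "(\<forall>i1 i2 j1 j2. bump P i1 i2 \<and> bump P j1 j2 \<and> (i1, i2) \<noteq> (j1, j2) \<and>
         i1 < j1 \<and> j1 < j2 \<and> j2 < i2 \<longrightarrow> \<not> same_region J i1 j1) \<longleftrightarrow>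
      (\<forall>i1 i2 j1 j2. brel (prel P) i1 i2 \<and> brel (prel P) j1 j2 \<and> i1<j1 \<and> j1<j2 \<and> j2<i2 \<longrightarrow> \<not>same_region J i1 j1)"
    by (auto simp: bump_brel[OF P])
  show ?thesis unfolding noncrossing_J_def NCR_def using P E nc1 nc2 nc3 by simp
qed

lemma nc_bij: "bij_betw (\<lambda>R. {1..n} // R) (NCR J {1..n}) (noncrossing_J n J)"
proof -
  let ?X = "{1..n::nat}"
  have inj: "inj_on (\<lambda>R. ?X // R) (NCR J ?X)"
  proof (rule inj_onI)
    fix R1 R2 assume h: "R1 \<in> NCR J ?X" "R2 \<in> NCR J ?X" "?X // R1 = ?X // R2"
    have "R1 = prel (?X // R1)" using prel_quot[OF NCR_D(1)[OF h(1)]] by simp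
    also have "\<dots> = prel (?X // R2)" using h(3) by simp
    also have "\<dots> = R2" using prel_quot[OF NCR_D(1)[OF h(2)]] by simp
    finally show "R1 = R2" .
  qed
  have img1: "(\<lambda>R. ?X // R) ` NCR J ?X \<subseteq> noncrossing_J n J"
  proof
    fix P assume "P \<in> (\<lambda>R. ?X // R) ` NCR J ?X"
    then obtain R where R: "R \<in> NCR J ?X" "P = ?X // R" by blast
    have E: "equiv ?X R" using NCR_D(1)[OF R(1)] .
    have Pp: "partition_on ?X P" using partition_on_quotient[OF E] R(2) by simp
    have "prel P = R" using prel_quot[OF E] R(2) by simp
    then show "P \<in> noncrossing_J n J" using nc_char[OF Pp] R(1) by simp
  qed
  have img2: "noncrossing_J n J \<subseteq> (\<lambda>R. ?X // R) ` NCR J ?X"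
  proof
    fix P assume P: "P \<in> noncrossing_J n J"
    then have Pp: "partition_on ?X P" unfolding noncrossing_J_def by blast
    have "prel P \<in> NCR J ?X" using nc_char[OF Pp] P by simp
    moreover have "?X // prel P = P" using partition_on_eq_quotient[OF Pp] unfolding prel_def .
    ultimately show "P \<in> (\<lambda>R. ?X // R) ` NCR J ?X" by (metis image_eqI)
  qed
  show ?thesis unfolding bij_betw_def using inj img1 img2 by blast
qed

theorem theorem4p2:
  fixes n :: nat and J :: "nat set"
  assumes "n > 0" and "J \<subseteq> {1..<n}"
  shows "\<exists>f. bij_betw f (parabolic_231 n J) (noncrossing_J n J)"
proof -
  have e: "parabolic_231 n J = SS J {1..n}" using par_eq[OF assms(2)] .
  have b1: "bij_betw (lrel {1..n}) (SS J {1..n}) (NCR J {1..n})" by (rule main_bij) simp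
  have b2: "bij_betw (\<lambda>R. {1..n} // R) (NCR J {1..n}) (noncrossing_J n J)" by (rule nc_bij)
  have "bij_betw ((\<lambda>R. {1..n} // R) \<circ> lrel {1..n}) (parabolic_231 n J) (noncrossing_J n J)"
    unfolding e by (rule bij_betw_trans[OF b1 b2])
  then show ?thesis by blast
qed

end
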